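(* Let $n\ge4$, $r_1,r_2,r_3\in\mathbb{Z}_+$ with $r_1+r_2+r_3=n-1$, and let $-1<\alpha_1<1$, $0\le\alpha_2,\alpha_3<1$ with $\alpha_1+\alpha_2+\alpha_3=1$, $r_1-1+\alpha_1\ge r_2+\alpha_2$ and $r_1-1+\alpha_1\ge r_3+1+\alpha_3$. Then $$\mathfrak{L}_n(r_1-1,r_2,r_3+1,\alpha_1,\alpha_2,\alpha_3)\le \mathfrak{L}_n(r_1,r_2,r_3,\alpha_1,\alpha_2,\alpha_3)+2^{r_2+r_3+2}+\frac{2^{r_2}}{r_1}-1+\begin{cases}2^{r_3}, & r_2\ge1,\\ 2^{r_3+1}\ln n, & r_2=0.\end{cases}$$
   Context: Points of a triangle are identified with barycentric coordinates $\lambda=(\lambda_1,\lambda_2,\lambda_3)$, $\lambda_r\ge0$, $\sum\lambda_r=1$. For an integer $n\ge1$ let $I=\{i=(i_1,i_2,i_3)\in\mathbb{Z}_+^3: i_1+i_2+i_3=n\}$, and let $l_i(\lambda)=\prod_{s=1}^{3}\frac{1}{i_s!}\prod_{t=0}^{i_s-1}(n\lambda_s-t)$ (the Lagrange fundamental polynomials for the equally spaced nodes $i/n$, $i\in I$). The Lebesgue function is $\mathcal{L}_n(\lambda)=\sum_{i\in I}|l_i(\lambda)|$. For $r_s\in\mathbb{Z}_+$ with $r_1+r_2+r_3=n-1$ and reals $\alpha_s$ with $\alpha_1+\alpha_2+\alpha_3=1$, write $\mathfrak{L}_n(r_1,r_2,r_3,\alpha_1,\alpha_2,\alpha_3)=\mathcal{L}_n(\lambda)$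 where $\lambda_s=(r_s+\alpha_s)/n$, $s=1,2,3$. *)

theory Defs
  imports Complex_Main
begin

definition idx :: "nat \<Rightarrow> (nat \<times> nat \<times> nat) set" where
  "idx n = {(i1, i2, i3). i1 + i2 + i3 = n}"

definition lfac :: "nat \<Rightarrow> nat \<Rightarrow> real \<Rightarrow> real" where
  "lfac n k x = (1 / fact k) * (\<Prod>t<k. (real n * x - real t))"

definition lagr :: "nat \<Rightarrow> nat \<times> nat \<times> nat \<Rightarrow> real \<times> real \<times> real \<Rightarrow> real" where
  "lagr n i lam = (case i of (i1, i2, i3) \<Rightarrow> case lam of (l1, l2, l3) \<Rightarrow>
       lfac n i1 l1 * lfac n i2 l2 * lfac n i3 l3)"

definition lebesgue :: "nat \<Rightarrow> real \<times> real \<times> real \<Rightarrow> real" where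
  "lebesgue n lam = (\<Sum>i\<in>idx n. \<bar>lagr n i lam\<bar>)"

definition frakL :: "nat \<Rightarrow> nat \<Rightarrow> nat \<Rightarrow> nat \<Rightarrow> real \<Rightarrow> real \<Rightarrow> real \<Rightarrow> real" where
  "frakL n r1 r2 r3 a1 a2 a3 =
     lebesgue n ((real r1 + a1) / real n, (real r2 + a2) / real n, (real r3 + a3) / real n)"

end

theory Submission
  imports Defs
begin


definition F :: "nat \<Rightarrow> real \<Rightarrow> real \<Rightarrow> real \<Rightarrow> real" where
  "F n y1 y2 y3 = (\<Sum>(i,j,k)\<in>idx n. \<bar>(y1 gchoose i) * (y2 gchoose j) * (y3 gchoose k)\<bar>)"

lemma finite_idx: "finite (idx n)"
proof -
  have "idx n \<subseteq> {..n} \<times> {..n} \<times> {..n}" unfolding idx_def by auto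
  thus ?thesis by (rule finite_subset) auto
qed

lemma lfac_eq: "n > 0 \<Longrightarrow> lfac n k (y / real n) = y gchoose k"
  unfolding lfac_def gbinomial_prod_rev
  by (simp add: atLeast0LessThan)

lemma frakL_eq:
  assumes "n > 0"
  shows "frakL n r1 r2 r3 a1 a2 a3 = F n (real r1 + a1) (real r2 + a2) (real r3 + a3)"
  unfolding frakL_def lebesgue_def F_def lagr_def
  by (rule sum.cong) (auto simp: lfac_eq[OF assms])



lemma g_Suc: "(y::real) gchoose (Suc j) = (y gchoose j) * (y - real j) / real (Suc j)"
proof -
  have "(y gchoose Suc j) * fact (Suc j) = (\<Prod>i = 0..<Suc j. y - of_nat i)"
    by (rule gbinomial_mult_fact')
  also have "\<dots> = (\<Prod>i = 0..<j. y - of_nat i) * (y - real j)" by simp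
  also have "\<dots> = (y gchoose j) * fact j * (y - real j)" by (simp add: gbinomial_mult_fact')
  finally have "(y gchoose Suc j) * fact (Suc j) = (y gchoose j) * fact j * (y - real j)" .
  hence "((y gchoose Suc j) * real (Suc j) - (y gchoose j) * (y - real j)) * fact j = 0"
    by (simp only: fact_Suc of_nat_mult) (simp add: algebra_simps)
  hence "(y gchoose Suc j) * real (Suc j) = (y gchoose j) * (y - real j)" by simp
  thus ?thesis by (simp add: field_simps del: of_nat_Suc)
qed

lemma g_le_choose:
  fixes r j :: nat and a :: real
  assumes "0 \<le> a" "a < 1" "j \<le> r + 1"
  shows "\<bar>(real r + a) gchoose j\<bar> \<le> real ((r+1) choose j)"
proof -
  have "\<bar>((real r + a) gchoose j) * fact j\<bar> = \<bar>\<Prod>i = 0..<j. real r + a - of_nat i\<bar>"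
    by (simp add: gbinomial_mult_fact')
  also have "\<dots> = (\<Prod>i = 0..<j. real r + a - of_nat i)"
    using assms by (intro abs_of_nonneg prod_nonneg) auto
  also have "\<dots> \<le> (\<Prod>i = 0..<j. real (r+1) - of_nat i)"
    using assms by (intro prod_mono) auto
  also have "\<dots> = (real (r+1) gchoose j) * fact j" by (simp add: gbinomial_mult_fact')
  also have "\<dots> = real ((r+1) choose j) * fact j" by (simp add: binomial_gbinomial)
  finally show ?thesis by (simp add: abs_mult)
qed

lemma g_mono:
  fixes y :: real
  assumes "y \<ge> -1" "real m \<ge> y" "m \<le> j"
  shows "\<bar>y gchoose j\<bar> \<le> \<bar>y gchoose m\<bar>"
  using assms(3)
proof (induction j rule: dec_induct)
  case base thus ?case by simp
next
  case (step j)
  have "real j \<ge> y" using assms step by linarith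
  hence "\<bar>y - real j\<bar> / real (Suc j) \<le> 1" using assms by (simp add: field_simps abs_if)
  hence "\<bar>y gchoose j\<bar> * (\<bar>y - real j\<bar> / real (Suc j)) \<le> \<bar>y gchoose j\<bar> * 1"
    by (intro mult_left_mono) auto
  hence "\<bar>y gchoose Suc j\<bar> \<le> \<bar>y gchoose j\<bar> * 1"
    by (simp add: g_Suc abs_mult abs_div del: of_nat_Suc)
  thus ?case using step by simp
qed

lemma g_top:
  fixes y :: real and q :: nat
  assumes "real q \<le> y" "y < real q + 1"
  shows "\<bar>y gchoose (q+1)\<bar> \<le> 1"
proof -
  have "\<bar>(real q + (y - real q)) gchoose (q+1)\<bar> \<le> real ((q+1) choose (q+1))"
    using assms by (intro g_le_choose) auto
  thus ?thesis by simp
qed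

lemma g_tail1:
  fixes y :: real and q j :: nat
  assumes "real q \<le> y" "y < real q + 1" "q + 1 \<le> j"
  shows "\<bar>y gchoose j\<bar> \<le> 1"
proof -
  have "\<bar>y gchoose j\<bar> \<le> \<bar>y gchoose (q+1)\<bar>"
    using assms by (intro g_mono) auto
  thus ?thesis using g_top[OF assms(1,2)] by linarith
qed

lemma g_tail2:
  fixes y :: real and q j :: nat
  assumes "real q \<le> y" "y < real q + 1" "q + 2 \<le> j"
  shows "\<bar>y gchoose j\<bar> \<le> 1 / (real q + 2)"
proof -
  have "\<bar>y gchoose j\<bar> \<le> \<bar>y gchoose (q+2)\<bar>"
    using assms by (intro g_mono) auto
  also have "y gchoose (q+2) = (y gchoose (q+1)) * (y - real (q+1)) / real (Suc (q+1))"
    using g_Suc[of y "q+1"] by simp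
  also have "\<bar>\<dots>\<bar> = \<bar>y gchoose (q+1)\<bar> * \<bar>y - real (q+1)\<bar> / (real q + 2)"
    by (simp add: abs_mult abs_div)
  also have "\<dots> \<le> 1 / (real q + 2)"
  proof (rule divide_right_mono)
    show "\<bar>y gchoose (q+1)\<bar> * \<bar>y - real (q+1)\<bar> \<le> 1"
      using g_top[OF assms(1,2)] assms by (intro mult_le_one) auto
  qed simp
  finally show ?thesis by simp
qed

lemma g_sum:
  fixes r K :: nat and a :: real
  assumes "0 \<le> a" "a < 1"
  shows "(\<Sum>j\<le>K. \<bar>(real r + a) gchoose j\<bar>) \<le> 2 ^ (r+1) + real (K - (r+1))"
proof -
  have "(\<Sum>j\<le>K. \<bar>(real r + a) gchoose j\<bar>) \<le>
        (\<Sum>j\<le>K. (if j \<le> r+1 then real ((r+1) choose j) else 0) + (if r+1 < j then 1 else 0))"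
  proof (rule sum_mono)
    fix j assume "j \<in> {..K}"
    show "\<bar>(real r + a) gchoose j\<bar> \<le> (if j \<le> r+1 then real ((r+1) choose j) else 0) + (if r+1 < j then 1 else 0)"
    proof (cases "j \<le> r+1")
      case True thus ?thesis using g_le_choose[OF assms True] by simp
    next
      case False
      have "\<bar>(real r + a) gchoose j\<bar> \<le> 1" using assms False by (intro g_tail1[of r]) auto
      thus ?thesis using False by simp
    qed
  qed
  also have "\<dots> = (\<Sum>j\<le>K. (if j \<le> r+1 then real ((r+1) choose j) else 0)) + (\<Sum>j\<le>K. (if r+1 < j then 1 else 0))"
    by (rule sum.distrib)
  also have "(\<Sum>j\<le>K. (if j \<le> r+1 then real ((r+1) choose j) else 0)) \<le> (\<Sum>j\<le>r+1. real ((r+1) choose j))"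
  proof -
    have "(\<Sum>j\<le>K. (if j \<le> r+1 then real ((r+1) choose j) else 0)) = (\<Sum>j\<in>{j\<in>{..K}. j \<le> r+1}. real ((r+1) choose j))"
      by (rule sum.inter_filter[symmetric]) simp
    also have "\<dots> \<le> (\<Sum>j\<le>r+1. real ((r+1) choose j))" by (intro sum_mono2) auto
    finally show ?thesis .
  qed
  also have "(\<Sum>j\<le>r+1. real ((r+1) choose j)) = 2 ^ (r+1)"
    using choose_row_sum[of "r+1"] by (metis of_nat_numeral of_nat_power of_nat_sum)
  also have "(\<Sum>j\<le>K. (if r+1 < j then 1 else 0::real)) = real (card {j\<in>{..K}. r+1 < j})"
    by (simp add: sum.inter_filter[symmetric])
  also have "{j\<in>{..K}. r+1 < j} = {r+2..K}" by auto
  finally show ?thesis by simp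
qed



lemma gA1a: "(A::real) \<noteq> 0 \<Longrightarrow> (A - 1) gchoose i = (A - real i) / A * (A gchoose i)"
  using gbinomial_absorb_comp[of A i] by (simp add: field_simps)

lemma gA1b: "(A::real) \<noteq> 0 \<Longrightarrow> (A - 1) gchoose i = (real i + 1) / A * (A gchoose Suc i)"
  using gbinomial_absorption[of i A] by (simp add: field_simps)

lemma pointwise:
  fixes A B C :: real
  assumes "A > 0"
  shows "\<bar>((A-1) gchoose i) * (B gchoose j) * ((C+1) gchoose k)\<bar> \<le>
    \<bar>A - real i\<bar> / A * \<bar>(A gchoose i) * (B gchoose j) * (C gchoose k)\<bar>
    + (if k > 0 then (real i + 1) / A * \<bar>(A gchoose (i+1)) * (B gchoose j) * (C gchoose (k-1))\<bar> else 0)"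
proof (cases k)
  case 0
  thus ?thesis using assms by (simp add: gA1a abs_mult abs_div)
next
  case (Suc k')
  have "((A-1) gchoose i) * (B gchoose j) * ((C+1) gchoose k)
     = ((A-1) gchoose i) * (B gchoose j) * (C gchoose k) + ((A-1) gchoose i) * (B gchoose j) * (C gchoose k')"
    using Suc by (simp add: gbinomial_Suc_Suc algebra_simps)
  also have "\<dots> = (A - real i) / A * ((A gchoose i) * (B gchoose j) * (C gchoose k))
      + (real i + 1) / A * ((A gchoose (i+1)) * (B gchoose j) * (C gchoose k'))"
  proof -
    have t1: "((A-1) gchoose i) * (B gchoose j) * (C gchoose k) = (A - real i) / A * ((A gchoose i) * (B gchoose j) * (C gchoose k))"
      using assms gA1a[of A i] by simp
    have t2: "((A-1) gchoose i) * (B gchoose j) * (C gchoose k') = (real i + 1) / A * ((A gchoose (i+1)) * (B gchoose j) * (C gchoose k'))"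
      using assms gA1b[of A i] by simp
    show ?thesis by (simp only: t1 t2)
  qed
  finally show ?thesis using Suc assms
    by (simp add: abs_mult abs_div abs_triangle_ineq [THEN order_trans])
qed

lemma reidx:
  fixes h :: "nat \<Rightarrow> nat \<Rightarrow> nat \<Rightarrow> real"
  assumes "\<And>j k. h 0 j k = 0"
  shows "(\<Sum>(i,j,k)\<in>idx n. (if k > 0 then h (i+1) j (k-1) else 0)) = (\<Sum>(i,j,k)\<in>idx n. h i j k)"
proof -
  have "(\<Sum>(i,j,k)\<in>idx n. (if k > 0 then h (i+1) j (k-1) else 0))
      = (\<Sum>x\<in>idx n. if snd (snd x) > 0 then (\<lambda>(i,j,k). h (i+1) j (k-1)) x else 0)"
    by (intro sum.cong) auto
  also have "\<dots> = (\<Sum>x\<in>{x\<in>idx n. snd (snd x) > 0}. (\<lambda>(i,j,k). h (i+1) j (k-1)) x)"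
    by (rule sum.inter_filter[symmetric, OF finite_idx])
  also have "\<dots> = (\<Sum>x\<in>{x\<in>idx n. fst x > 0}. (\<lambda>(i,j,k). h i j k) x)"
    by (rule sum.reindex_bij_witness[where i="\<lambda>(i,j,k). (i-1,j,k+1)" and j="\<lambda>(i,j,k). (i+1,j,k-1)"])
       (auto simp: idx_def)
  also have "\<dots> = (\<Sum>x\<in>idx n. if fst x > 0 then (\<lambda>(i,j,k). h i j k) x else 0)"
    by (rule sum.inter_filter[OF finite_idx])
  also have "\<dots> = (\<Sum>(i,j,k)\<in>idx n. h i j k)"
    by (intro sum.cong) (auto simp: assms)
  finally show ?thesis .
qed

lemma combine:
  fixes A B C :: real
  assumes "A > 0"
  shows "\<bar>A - real i\<bar> / A * \<bar>(A gchoose i) * (B gchoose j) * (C gchoose k)\<bar>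
     + real i / A * \<bar>(A gchoose i) * (B gchoose j) * (C gchoose k)\<bar>
     = \<bar>(A gchoose i) * (B gchoose j) * (C gchoose k)\<bar>
       + (if real i > A then 2 * \<bar>((A-1) gchoose i) * (B gchoose j) * (C gchoose k)\<bar> else 0)"
proof (cases "real i > A")
  case True
  have "\<bar>((A-1) gchoose i) * (B gchoose j) * (C gchoose k)\<bar> = (real i - A) / A * \<bar>(A gchoose i) * (B gchoose j) * (C gchoose k)\<bar>"
    using assms True by (simp add: gA1a abs_mult abs_div)
  thus ?thesis using True assms by (simp add: field_simps)
next
  case False
  thus ?thesis using assms by (simp add: field_simps)
qed

lemma shift:
  fixes A B C :: real
  assumes "A > 0"
  shows "F n (A-1) B (C+1) \<le> F n A B C +
    (\<Sum>(i,j,k)\<in>idx n. if real i > A then 2 * \<bar>((A-1) gchoose i) * (B gchoose j) * (C gchoose k)\<bar> else 0)"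
proof -
  let ?o = "\<lambda>i j k. \<bar>(A gchoose i) * (B gchoose j) * (C gchoose k)\<bar>"
  have "F n (A-1) B (C+1) \<le> (\<Sum>(i,j,k)\<in>idx n. \<bar>A - real i\<bar> / A * ?o i j k
    + (if k > 0 then (real i + 1) / A * ?o (i+1) j (k-1) else 0))"
    unfolding F_def
  proof (rule sum_mono)
    fix x assume "x \<in> idx n"
    obtain i j k where x: "x = (i,j,k)" by (cases x) auto
    show "(\<lambda>(i,j,k). \<bar>((A-1) gchoose i) * (B gchoose j) * ((C+1) gchoose k)\<bar>) x \<le> (\<lambda>(i,j,k). \<bar>A - real i\<bar> / A * ?o i j k
    + (if k > 0 then (real i + 1) / A * ?o (i+1) j (k-1) else 0)) x"
      unfolding x using pointwise[OF assms, where i=i and j=j and k=k and B=B and C=C] by simp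
  qed
  also have "\<dots> = (\<Sum>(i,j,k)\<in>idx n. \<bar>A - real i\<bar> / A * ?o i j k)
      + (\<Sum>(i,j,k)\<in>idx n. (if k > 0 then (\<lambda>i j k. real i / A * ?o i j k) (i+1) j (k-1) else 0))"
    by (subst sum.distrib[symmetric], rule sum.cong, auto)
  also have "(\<Sum>(i,j,k)\<in>idx n. (if k > 0 then (\<lambda>i j k. real i / A * ?o i j k) (i+1) j (k-1) else 0))
      = (\<Sum>(i,j,k)\<in>idx n. real i / A * ?o i j k)"
    by (rule reidx) simp
  also have "(\<Sum>(i,j,k)\<in>idx n. \<bar>A - real i\<bar> / A * ?o i j k) + (\<Sum>(i,j,k)\<in>idx n. real i / A * ?o i j k)
      = (\<Sum>(i,j,k)\<in>idx n. ?o i j k + (if real i > A then 2 * \<bar>((A-1) gchoose i) * (B gchoose j) * (C gchoose k)\<bar> else 0))"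
  proof (subst sum.distrib[symmetric], rule sum.cong)
    fix x assume "x \<in> idx n"
    obtain i j k where x: "x = (i,j,k)" by (cases x) auto
    show "(\<lambda>x. (\<lambda>(i, j, k). \<bar>A - real i\<bar> / A * ?o i j k) x + (\<lambda>(i, j, k). real i / A * ?o i j k) x) x =
         (\<lambda>(i,j,k). ?o i j k + (if real i > A then 2 * \<bar>((A-1) gchoose i) * (B gchoose j) * (C gchoose k)\<bar> else 0)) x"
      unfolding x using combine[OF assms, where i=i and j=j and k=k and B=B and C=C] by simp
  qed simp
  also have "\<dots> = F n A B C +
    (\<Sum>(i,j,k)\<in>idx n. if real i > A then 2 * \<bar>((A-1) gchoose i) * (B gchoose j) * (C gchoose k)\<bar> else 0)"
    unfolding F_def by (subst sum.distrib[symmetric], rule sum.cong, auto)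
  finally show ?thesis .
qed



lemma Ebound:
  fixes A a2 a3 :: real and q n r2 r3 :: nat
  assumes q1: "real q \<le> A - 1" and q2: "A - 1 < real q + 1"
    and "0 \<le> a2" "a2 < 1" "0 \<le> a3" "a3 < 1"
  defines "B \<equiv> real r2 + a2" and "C \<equiv> real r3 + a3" and "K \<equiv> n - (q+2)"
  shows "(\<Sum>(i,j,k)\<in>idx n. if real i > A then 2 * \<bar>((A-1) gchoose i) * (B gchoose j) * (C gchoose k)\<bar> else 0)
     \<le> 2 / (real q + 2) * ((2 ^ (r2+1) + real (K - (r2+1))) * (2 ^ (r3+1) + real (K - (r3+1))))"
proof -
  let ?w = "\<lambda>(j,k). 2 / (real q + 2) * (\<bar>B gchoose j\<bar> * \<bar>C gchoose k\<bar>)"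
  let ?S = "{x\<in>idx n. q + 2 \<le> fst x}"
  let ?p = "\<lambda>x::nat\<times>nat\<times>nat. snd x"
  have "(\<Sum>(i,j,k)\<in>idx n. if real i > A then 2 * \<bar>((A-1) gchoose i) * (B gchoose j) * (C gchoose k)\<bar> else 0)
     \<le> (\<Sum>x\<in>idx n. if q + 2 \<le> fst x then ?w (snd x) else 0)"
  proof (rule sum_mono)
    fix x assume "x \<in> idx n"
    obtain i j k where x: "x = (i,j,k)" by (cases x) auto
    show "(\<lambda>(i,j,k). if real i > A then 2 * \<bar>((A-1) gchoose i) * (B gchoose j) * (C gchoose k)\<bar> else 0) x
       \<le> (if q + 2 \<le> fst x then ?w (snd x) else 0)"
    proof (cases "real i > A")
      case True
      hence qi: "q + 2 \<le> i" using q1 by linarith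
      have "\<bar>(A-1) gchoose i\<bar> \<le> 1 / (real q + 2)" using g_tail2[OF q1 q2 qi] .
      hence "2 * (\<bar>(A-1) gchoose i\<bar> * (\<bar>B gchoose j\<bar> * \<bar>C gchoose k\<bar>))
          \<le> 2 * (1 / (real q + 2) * (\<bar>B gchoose j\<bar> * \<bar>C gchoose k\<bar>))"
        by (intro mult_left_mono mult_right_mono) auto
      thus ?thesis using True qi unfolding x by (simp add: abs_mult mult.assoc)
    next
      case False
      thus ?thesis unfolding x by auto
    qed
  qed
  also have "\<dots> = (\<Sum>x\<in>?S. ?w (snd x))"
    by (rule sum.inter_filter[symmetric, OF finite_idx])
  also have "\<dots> = (\<Sum>y\<in>snd ` ?S. ?w y)"
  proof (rule sum.reindex[symmetric, unfolded comp_def])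
    show "inj_on snd ?S" by (rule inj_onI) (auto simp: idx_def)
  qed
  also have "\<dots> \<le> (\<Sum>y\<in>{..K} \<times> {..K}. ?w y)"
    by (rule sum_mono2) (auto simp: idx_def K_def)
  also have "\<dots> = 2 / (real q + 2) * ((\<Sum>j\<le>K. \<bar>B gchoose j\<bar>) * (\<Sum>k\<le>K. \<bar>C gchoose k\<bar>))"
  proof -
    have "(\<Sum>y\<in>{..K} \<times> {..K}. ?w y) = 2 / (real q + 2) * (\<Sum>y\<in>{..K} \<times> {..K}. \<bar>B gchoose fst y\<bar> * \<bar>C gchoose snd y\<bar>)"
      by (simp add: sum_distrib_left split_def)
    also have "(\<Sum>y\<in>{..K} \<times> {..K}. \<bar>B gchoose fst y\<bar> * \<bar>C gchoose snd y\<bar>) = (\<Sum>j\<le>K. \<Sum>k\<le>K. \<bar>B gchoose j\<bar> * \<bar>C gchoose k\<bar>)"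
      by (simp add: sum.cartesian_product split_def)
    also have "\<dots> = (\<Sum>j\<le>K. \<bar>B gchoose j\<bar>) * (\<Sum>k\<le>K. \<bar>C gchoose k\<bar>)"
      by (simp add: sum_product)
    finally show ?thesis .
  qed
  also have "\<dots> \<le> 2 / (real q + 2) * ((2 ^ (r2+1) + real (K - (r2+1))) * (2 ^ (r3+1) + real (K - (r3+1))))"
    unfolding B_def C_def using assms
    by (intro mult_left_mono mult_mono g_sum sum_nonneg) auto
  finally show ?thesis .
qed



lemma pow_lin: "2 \<le> k \<Longrightarrow> 4 * (real k - 1) \<le> 2 ^ k"
proof (induction k rule: dec_induct)
  case base thus ?case by simp
next
  case (step k)
  have "(1::real) \<le> 2 ^ k" by simp
  thus ?case using step by simp
qed

lemma core_ge:
  fixes a b X Y M :: real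
  assumes "a \<ge> 3" "b \<ge> 2" "a \<ge> b" "X \<ge> 4 * (a - 1)" "Y \<ge> 4 * (b - 1)" "Y \<ge> 4" "X \<ge> Y" "M \<ge> a + 1"
  shows "2 * ((X + (b - 1)) * (Y + (a - 1))) \<le> M * (X * Y)"
proof -
  have X4: "X \<ge> 4" using assms by linarith
  have h1: "2 * ((b-1) * Y) \<le> X * Y / 2"
  proof -
    have "2 * ((b-1) * Y) \<le> 2 * (Y/4 * Y)" using assms by (intro mult_left_mono mult_right_mono) auto
    also have "\<dots> \<le> 2 * (X/4 * Y)" using assms by (intro mult_left_mono mult_right_mono) auto
    finally show ?thesis by simp
  qed
  have h2: "2 * ((a-1) * X) \<le> (a-1) * (X * Y) / 2"
  proof -
    have "(a-1) * X * 4 \<le> (a-1) * X * Y" using assms X4 by (intro mult_left_mono) auto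
    thus ?thesis by simp
  qed
  have h3: "2 * ((a-1) * (b-1)) \<le> X * Y / 8"
  proof -
    have "(a-1) * (b-1) \<le> (X/4) * (Y/4)" using assms by (intro mult_mono) auto
    thus ?thesis by simp
  qed
  have h4: "(a - 1) / 2 * (X*Y) + 21/8 * (X * Y) \<le> M * (X * Y)"
  proof -
    have "(a - 1) / 2 + 21/8 \<le> M" using assms by (simp add: field_simps)
    moreover have "X * Y \<ge> 0" using assms X4 by simp
    ultimately show ?thesis by (metis distrib_right mult_right_mono)
  qed
  have "2 * ((X + (b - 1)) * (Y + (a - 1))) = 2*(X*Y) + 2 * ((a-1) * X) + 2 * ((b-1) * Y) + 2 * ((a-1) * (b-1))"
    by (simp add: algebra_simps)
  thus ?thesis using h1 h2 h3 h4 by (simp add: field_simps) 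
qed

lemma core_lt:
  fixes a b X Y M :: real
  assumes "a \<ge> 2" "b \<ge> a + 1" "X \<ge> 4 * (a - 1)" "Y \<ge> 4 * (b - 1)" "X \<ge> 4" "Y \<ge> 2 * X" "M \<ge> b + 2"
  shows "2 * ((X + (b - 1)) * (Y + (a - 1))) \<le> M * (X * Y)"
proof -
  have Y4: "Y \<ge> 4" using assms by linarith
  have h1: "2 * ((a-1) * X) \<le> X * Y / 4"
  proof -
    have "2 * ((a-1) * X) \<le> 2 * (X/4 * X)" using assms by (intro mult_left_mono mult_right_mono) auto
    also have "\<dots> \<le> 2 * (Y/8 * X)" using assms by (intro mult_left_mono mult_right_mono) auto
    finally show ?thesis by simp
  qed
  have h2: "2 * ((b-1) * Y) \<le> (b-1) * (X * Y) / 2"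
  proof -
    have "(b-1) * Y * 4 \<le> (b-1) * Y * X" using assms Y4 by (intro mult_left_mono) auto
    thus ?thesis by (simp add: algebra_simps)
  qed
  have h3: "2 * ((a-1) * (b-1)) \<le> X * Y / 8"
  proof -
    have "(a-1) * (b-1) \<le> (X/4) * (Y/4)" using assms by (intro mult_mono) auto
    thus ?thesis by simp
  qed
  have h4: "(b - 1) / 2 * (X*Y) + 19/8 * (X * Y) \<le> M * (X * Y)"
  proof -
    have "(b - 1) / 2 + 19/8 \<le> M" using assms by (simp add: field_simps)
    moreover have "X * Y \<ge> 0" using assms Y4 by simp
    ultimately show ?thesis by (metis distrib_right mult_right_mono)
  qed
  have "2 * ((X + (b - 1)) * (Y + (a - 1))) = 2*(X*Y) + 2 * ((a-1) * X) + 2 * ((b-1) * Y) + 2 * ((a-1) * (b-1))"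
    by (simp add: algebra_simps)
  thus ?thesis using h1 h2 h3 h4 by (simp add: field_simps)
qed

lemma P0:
  fixes a b :: nat and M :: real
  assumes "a \<ge> 1" "b \<ge> 1" "M \<ge> real a + 1" "M \<ge> real b + 2"
  shows "2 * ((2^a + (real b - 1)) * (2^b + (real a - 1))) \<le> M * (2^a * 2^b)"
proof -
  consider "b = 1" | "a = 1" | "a = 2" "b = 2" | "a \<ge> 3" "b \<ge> 2" "a \<ge> b" | "a \<ge> 2" "b \<ge> a + 1"
    using assms by linarith
  thus ?thesis
  proof cases
    case 1
    have "(2::real)^a * (real a + 1) \<le> 2^a * M" using assms by (intro mult_left_mono) auto
    thus ?thesis using 1 by (simp add: algebra_simps)
  next
    case 2
    have "(2::real)^b * (real b + 1) \<le> 2^b * M" using assms by (intro mult_left_mono) auto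
    thus ?thesis using 2 by (simp add: algebra_simps)
  next
    case 3 thus ?thesis using assms by simp
  next
    case 4
    have "(2::real)^b \<le> 2^a" using 4 by (intro power_increasing) auto
    moreover have "(2::real)^b \<ge> 4"
    proof -
      have "(2::real)^2 \<le> 2^b" using 4 by (intro power_increasing) auto
      thus ?thesis by simp
    qed
    ultimately show ?thesis using 4 assms pow_lin[of a] pow_lin[of b]
      by (intro core_ge) auto
  next
    case 5
    have "(2::real)^(a+1) \<le> 2^b" using 5 by (intro power_increasing) auto
    moreover have "(2::real)^a \<ge> 4"
    proof -
      have "(2::real)^2 \<le> 2^a" using 5 by (intro power_increasing) auto
      thus ?thesis by simp
    qed
    ultimately show ?thesis using 5 assms pow_lin[of a] pow_lin[of b]
      by (intro core_lt) auto
  qed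
qed

lemma P:
  fixes a b x y :: nat and M :: real
  assumes "a \<ge> 1" "b \<ge> 1" "x \<le> b - 1" "y \<le> a - 1" "M \<ge> real a + 1" "M \<ge> real b + 2"
  shows "2 / M * ((2^a + real x) * (2^b + real y)) \<le> 2 ^ (a + b)"
proof -
  have "(2^a + real x) * (2^b + real y) \<le> (2^a + (real b - 1)) * (2^b + (real a - 1))"
    using assms by (intro mult_mono add_left_mono) auto
  hence "2 * ((2^a + real x) * (2^b + real y)) \<le> M * (2^a * 2^b)"
    using P0[OF assms(1,2,5,6)] by linarith
  moreover have "M > 0" using assms by linarith
  ultimately show ?thesis by (simp add: field_simps power_add)
qed



theorem lemma14:
  fixes n r1 r2 r3 :: nat and a1 a2 a3 :: real
  assumes "n \<ge> 4"
    and "r1 + r2 + r3 = n - 1"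
    and "-1 < a1" and "a1 < 1"
    and "0 \<le> a2" and "a2 < 1"
    and "0 \<le> a3" and "a3 < 1"
    and "a1 + a2 + a3 = 1"
    and "real r1 - 1 + a1 \<ge> real r2 + a2"
    and "real r1 - 1 + a1 \<ge> real r3 + 1 + a3"
  shows "frakL n (r1 - 1) r2 (r3 + 1) a1 a2 a3
           \<le> frakL n r1 r2 r3 a1 a2 a3 + 2 ^ (r2 + r3 + 2) + 2 ^ r2 / real r1 - 1
             + (if r2 \<ge> 1 then 2 ^ r3 else 2 ^ (r3 + 1) * ln (real n))"
proof -
  have n0: "n > 0" using assms by simp
  have nsum: "n = r1 + r2 + r3 + 1" using assms by linarith
  have r1a: "r2 + 1 \<le> r1" using assms by linarith
  have r1b: "r3 + 2 \<le> r1" using assms by linarith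
  define A where "A = real r1 + a1"
  define B where "B = real r2 + a2"
  define C where "C = real r3 + a3"
  have A0: "A > 0" using assms r1b unfolding A_def by linarith
  have L1: "frakL n (r1 - 1) r2 (r3 + 1) a1 a2 a3 = F n (A - 1) B (C + 1)"
  proof -
    have "frakL n (r1 - 1) r2 (r3 + 1) a1 a2 a3 = F n (real (r1 - 1) + a1) (real r2 + a2) (real (r3 + 1) + a3)"
      by (rule frakL_eq[OF n0])
    also have "real (r1 - 1) + a1 = A - 1" using r1b unfolding A_def by (simp add: of_nat_diff)
    also have "real (r3 + 1) + a3 = C + 1" unfolding C_def by simp
    finally show ?thesis unfolding B_def .
  qed
  have L2: "frakL n r1 r2 r3 a1 a2 a3 = F n A B C"
    unfolding A_def B_def C_def by (rule frakL_eq[OF n0])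
  let ?E = "(\<Sum>(i,j,k)\<in>idx n. if real i > A then 2 * \<bar>((A-1) gchoose i) * (B gchoose j) * (C gchoose k)\<bar> else 0)"
  have S: "F n (A - 1) B (C + 1) \<le> F n A B C + ?E" by (rule shift[OF A0])
  have E: "?E \<le> 2 ^ (r2 + r3 + 2)"
  proof (cases "a1 \<ge> 0")
    case True
    define q where "q = r1 - 1"
    have q1: "real q \<le> A - 1" and q2: "A - 1 < real q + 1"
      using True assms r1b unfolding q_def A_def by (auto simp: of_nat_diff)
    have "?E \<le> 2 / (real q + 2) * ((2 ^ (r2+1) + real ((n - (q+2)) - (r2+1))) * (2 ^ (r3+1) + real ((n - (q+2)) - (r3+1))))"
      unfolding B_def C_def using Ebound[OF q1 q2 assms(5,6,7,8)] by simp
    also have "\<dots> \<le> 2 ^ ((r2 + 1) + (r3 + 1))"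
      using r1a r1b nsum unfolding q_def by (intro P) auto
    finally show ?thesis by (simp add: add.assoc)
  next
    case False
    have r1c: "r2 + 2 \<le> r1" using assms False by linarith
    have r1d: "r3 + 3 \<le> r1" using assms False by linarith
    define q where "q = r1 - 2"
    have q1: "real q \<le> A - 1" and q2: "A - 1 < real q + 1"
      using False assms r1b unfolding q_def A_def by (auto simp: of_nat_diff)
    have "?E \<le> 2 / (real q + 2) * ((2 ^ (r2+1) + real ((n - (q+2)) - (r2+1))) * (2 ^ (r3+1) + real ((n - (q+2)) - (r3+1))))"
      unfolding B_def C_def using Ebound[OF q1 q2 assms(5,6,7,8)] by simp
    also have "\<dots> \<le> 2 ^ ((r2 + 1) + (r3 + 1))"
      using r1c r1d nsum unfolding q_def by (intro P) auto
    finally show ?thesis by (simp add: add.assoc)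
  qed
  have X: "0 \<le> 2 ^ r2 / real r1 - 1 + (if r2 \<ge> 1 then 2 ^ r3 else 2 ^ (r3 + 1) * ln (real n))"
  proof -
    have "0 \<le> (2::real) ^ r2 / real r1" by simp
    moreover have "1 \<le> (if r2 \<ge> 1 then 2 ^ r3 else 2 ^ (r3 + 1) * ln (real n))"
    proof (cases "r2 \<ge> 1")
      case True thus ?thesis by simp
    next
      case False
      have "exp 1 \<le> real n" using exp_le assms by linarith
      hence l: "1 \<le> ln (real n)" using n0 by (subst ln_ge_iff) auto
      have "(1::real) \<le> 2 ^ (r3 + 1)" by (rule one_le_power) simp
      hence "1 * 1 \<le> (2::real) ^ (r3 + 1) * ln (real n)" using l by (intro mult_mono) auto
      thus ?thesis using False by simp
    qed
    ultimately show ?thesis by linarith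
  qed
  show ?thesis using L1 L2 S E X by linarith
qed


end
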